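(* For every $n\ge1$, $\mathcal{C}^*(n)\le 1-L(n)$, where $L(n)$ is the optimal value of the following linear program in variables $y_0,\dots,y_{\lfloor n/2\rfloor}\in\mathbb{R}$: minimize $3^ny_0$ subject to $y_j\ge0$ for all $j$, $\sum_{j=0}^{\lfloor n/2\rfloor}K_i(2j)y_j\ge0$ for all $i=0,\dots,n$, and $\sum_{j=0}^{\lfloor n/2\rfloor}3^{n-2j}y_j=1$.
   Context: The concentratable entanglement of an $n$-qubit pure state is $\mathcal{C}(\ket{\psi})=1-\frac{1}{2^{n}}\sum_{\alpha\subseteq [n]}\mathrm{Tr}[\rho_\alpha^2]$ ($\rho_\alpha$ the reduced state on $\alpha$, $\mathrm{Tr}[\rho_\emptyset^2]=1$), and $\mathcal{C}^*(n)=\max_{\ket{\psi}\in(\mathbb{C}^2)^{\otimes n}}\mathcal{C}(\ket{\psi})$. The quaternary Krawtchouk polynomials are $K_w(l)=\sum_{j=0}^{w}\binom{l}{j}\binom{n-l}{w-j}(-1)^j3^{w-j}$ for $w,l\in\{0,\dots,n\}$. *)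

theory Defs
  imports Complex_Main
begin

(* Qubits are indexed by {..<n}; a computational basis state is identified with the
   set x \<subseteq> {..<n} of qubits in state |1>.  A state vector is psi :: nat set \<Rightarrow> complex
   (values outside Pow {..<n} are irrelevant). *)

definition pure_state :: "nat \<Rightarrow> (nat set \<Rightarrow> complex) \<Rightarrow> bool" where
  "pure_state n psi \<longleftrightarrow> (\<Sum>x\<in>Pow {..<n}. (cmod (psi x))^2) = 1"

(* matrix entry <a|rho_alpha|a'> of the reduced state on alpha, a, a' \<subseteq> alpha
   (partial trace over the complement of alpha) *)
definition reduced_state ::
  "nat \<Rightarrow> (nat set \<Rightarrow> complex) \<Rightarrow> nat set \<Rightarrow> nat set \<Rightarrow> nat set \<Rightarrow> complex" where
  "reduced_state n psi alpha a a' =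
     (\<Sum>b\<in>Pow ({..<n} - alpha). psi (a \<union> b) * cnj (psi (a' \<union> b)))"

definition purity :: "nat \<Rightarrow> (nat set \<Rightarrow> complex) \<Rightarrow> nat set \<Rightarrow> real" where
  "purity n psi alpha =
     Re (\<Sum>a\<in>Pow alpha. \<Sum>a'\<in>Pow alpha.
            reduced_state n psi alpha a a' * reduced_state n psi alpha a' a)"

definition conc_ent :: "nat \<Rightarrow> (nat set \<Rightarrow> complex) \<Rightarrow> real" where
  "conc_ent n psi = 1 - (1 / 2^n) * (\<Sum>alpha\<in>Pow {..<n}. purity n psi alpha)"

definition conc_ent_max :: "nat \<Rightarrow> real" where
  "conc_ent_max n = (SUP psi\<in>{psi. pure_state n psi}. conc_ent n psi)"

definition kraw :: "nat \<Rightarrow> nat \<Rightarrow> nat \<Rightarrow> real" where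
  "kraw n w l = (\<Sum>j=0..w. real (l choose j) * real ((n - l) choose (w - j))
                              * (-1)^j * 3^(w - j))"

definition lp_feasible :: "nat \<Rightarrow> (nat \<Rightarrow> real) \<Rightarrow> bool" where
  "lp_feasible n y \<longleftrightarrow>
     (\<forall>j\<le>n div 2. y j \<ge> 0) \<and>
     (\<forall>i\<le>n. (\<Sum>j=0..n div 2. kraw n i (2*j) * y j) \<ge> 0) \<and>
     (\<Sum>j=0..n div 2. 3^(n - 2*j) * y j) = 1"

definition LP_val :: "nat \<Rightarrow> real" where
  "LP_val n = (INF y\<in>{y. lp_feasible n y}. 3^n * y 0)"

end

theory Submission
  imports Defs
begin

lemma prod_if_pow:
  assumes "finite T"
  shows "(\<Prod>k\<in>T. if k \<in> S then a else 1) = a ^ card (T \<inter> S)"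
proof -
  have "(\<Prod>k\<in>T. if k \<in> S then a else 1) = (\<Prod>k\<in>T \<inter> S. a)"
    using assms by (simp add: prod.If_cases Int_def)
  then show ?thesis by simp
qed

lemma sum_pow_prod:
  fixes f g :: "'a \<Rightarrow> 'c::comm_semiring_1"
  assumes "finite A"
  shows "(\<Sum>X\<in>Pow A. (\<Prod>x\<in>X. f x) * (\<Prod>x\<in>A-X. g x)) = (\<Prod>x\<in>A. f x + g x)"
  by (rule prod_add[OF assms, symmetric])

lemma char_sum:
  assumes "finite A"
  shows "(\<Sum>X\<in>Pow A. (-1::'c::comm_ring_1) ^ card (X \<inter> D))
        = (if A \<inter> D = {} then 2 ^ card A else 0)"
proof -
  have "(\<Sum>X\<in>Pow A. (-1::'c) ^ card (X \<inter> D))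
      = (\<Sum>X\<in>Pow A. (\<Prod>k\<in>X. if k \<in> D then -1 else 1) * (\<Prod>k\<in>A-X. 1))"
    apply (rule sum.cong[OF refl])
    apply (subst prod_if_pow)
    using assms finite_subset by auto
  also have "\<dots> = (\<Prod>k\<in>A. (if k \<in> D then -1 else 1) + 1)"
    by (rule sum_pow_prod[OF assms])
  also have "\<dots> = (if A \<inter> D = {} then 2 ^ card A else 0)"
  proof (cases "A \<inter> D = {}")
    case True
    then have "(\<Prod>k\<in>A. (if k \<in> D then -1 else 1) + (1::'c)) = (\<Prod>k\<in>A. 2)"
      by (intro prod.cong) auto
    then show ?thesis using True by simp
  next
    case False
    then obtain k where "k \<in> A" "k \<in> D" by auto
    then have "(\<Prod>k\<in>A. (if k \<in> D then -1 else 1) + (1::'c)) = 0"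
      using assms by (intro prod_zero) auto
    then show ?thesis using False by simp
  qed
  finally show ?thesis .
qed


definition quad :: "nat \<Rightarrow> (nat set \<Rightarrow> complex) \<Rightarrow> nat set \<Rightarrow> complex" where
  "quad n psi al = (\<Sum>a\<in>Pow al. \<Sum>a'\<in>Pow al. \<Sum>b\<in>Pow ({..<n} - al). \<Sum>b'\<in>Pow ({..<n} - al).
      psi (a \<union> b) * cnj (psi (a' \<union> b)) * psi (a' \<union> b') * cnj (psi (a \<union> b')))"

lemma purity_quad: "purity n psi al = Re (quad n psi al)"
  unfolding purity_def quad_def reduced_state_def
  by (simp add: sum_product mult.assoc mult.left_commute)

lemma split_sum:
  assumes "al \<subseteq> N" "finite N"
  shows "(\<Sum>u\<in>Pow N. f u) = (\<Sum>a\<in>Pow al. \<Sum>b\<in>Pow (N - al). f (a \<union> b))"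
proof -
  have inj: "inj_on (\<lambda>(a,b). a \<union> b) (Pow al \<times> Pow (N - al))"
    by (auto simp: inj_on_def)
  have im: "(\<lambda>(a,b). a \<union> b) ` (Pow al \<times> Pow (N - al)) = Pow N"
  proof
    show "(\<lambda>(a,b). a \<union> b) ` (Pow al \<times> Pow (N - al)) \<subseteq> Pow N" using assms by auto
    show "Pow N \<subseteq> (\<lambda>(a,b). a \<union> b) ` (Pow al \<times> Pow (N - al))"
    proof
      fix u assume "u \<in> Pow N"
      then have "u = (\<lambda>(a,b). a \<union> b) (u \<inter> al, u - al)" "(u \<inter> al, u - al) \<in> Pow al \<times> Pow (N - al)"
        by auto
      then show "u \<in> (\<lambda>(a,b). a \<union> b) ` (Pow al \<times> Pow (N - al))" by blast
    qed
  qed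
  have "(\<Sum>u\<in>Pow N. f u) = (\<Sum>p\<in>Pow al \<times> Pow (N - al). f ((\<lambda>(a,b). a \<union> b) p))"
    using sum.reindex[OF inj, of f] im by simp
  also have "\<dots> = (\<Sum>a\<in>Pow al. \<Sum>b\<in>Pow (N - al). f (a \<union> b))"
    by (simp add: sum.cartesian_product split_def)
  finally show ?thesis .
qed


definition sw :: "nat set \<Rightarrow> nat set \<times> nat set \<Rightarrow> nat set \<times> nat set" where
  "sw g p = ((fst p - g) \<union> (snd p \<inter> g), (snd p - g) \<union> (fst p \<inter> g))"

definition Phi :: "(nat set \<Rightarrow> complex) \<Rightarrow> nat set \<times> nat set \<Rightarrow> complex" where
  "Phi psi p = psi (fst p) * psi (snd p)"

definition GG :: "nat \<Rightarrow> (nat set \<Rightarrow> complex) \<Rightarrow> nat set \<Rightarrow> complex" where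
  "GG n psi g = (\<Sum>p\<in>Pow {..<n} \<times> Pow {..<n}. Phi psi (sw g p) * cnj (Phi psi p))"

lemma GG_quad:
  assumes g: "g \<subseteq> {..<n}"
  shows "GG n psi g = quad n psi g"
proof -
  let ?N = "{..<n}"
  have "GG n psi g = (\<Sum>u\<in>Pow ?N. \<Sum>v\<in>Pow ?N. Phi psi (sw g (u,v)) * cnj (Phi psi (u,v)))"
    unfolding GG_def by (simp add: sum.cartesian_product)
  also have "\<dots> = (\<Sum>a\<in>Pow g. \<Sum>b\<in>Pow (?N - g). \<Sum>a'\<in>Pow g. \<Sum>b'\<in>Pow (?N - g).
        Phi psi (sw g (a \<union> b, a' \<union> b')) * cnj (Phi psi (a \<union> b, a' \<union> b')))"
    by (simp add: split_sum[OF g])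
  also have "\<dots> = (\<Sum>a\<in>Pow g. \<Sum>b\<in>Pow (?N - g). \<Sum>a'\<in>Pow g. \<Sum>b'\<in>Pow (?N - g).
        psi (a' \<union> b) * psi (a \<union> b') * cnj (psi (a \<union> b)) * cnj (psi (a' \<union> b')))"
  proof (intro sum.cong refl)
    fix a b a' b' assume "a \<in> Pow g" "b \<in> Pow (?N - g)" "a' \<in> Pow g" "b' \<in> Pow (?N - g)"
    then have "sw g (a \<union> b, a' \<union> b') = (a' \<union> b, a \<union> b')"
      unfolding sw_def by auto
    then show "Phi psi (sw g (a \<union> b, a' \<union> b')) * cnj (Phi psi (a \<union> b, a' \<union> b')) =
        psi (a' \<union> b) * psi (a \<union> b') * cnj (psi (a \<union> b)) * cnj (psi (a' \<union> b'))"
      by (simp add: Phi_def)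
  qed
  also have "\<dots> = (\<Sum>a\<in>Pow g. \<Sum>a'\<in>Pow g. \<Sum>b\<in>Pow (?N - g). \<Sum>b'\<in>Pow (?N - g).
        psi (a' \<union> b) * psi (a \<union> b') * cnj (psi (a \<union> b)) * cnj (psi (a' \<union> b')))"
    by (intro sum.cong refl sum.swap)
  also have "\<dots> = (\<Sum>a'\<in>Pow g. \<Sum>a\<in>Pow g. \<Sum>b\<in>Pow (?N - g). \<Sum>b'\<in>Pow (?N - g).
        psi (a' \<union> b) * psi (a \<union> b') * cnj (psi (a \<union> b)) * cnj (psi (a' \<union> b')))"
    by (rule sum.swap)
  also have "\<dots> = quad n psi g"
    unfolding quad_def by (intro sum.cong refl) (simp add: algebra_simps)
  finally show ?thesis .
qed

lemma GG_compl:
  assumes g: "g \<subseteq> {..<n}"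
  shows "GG n psi ({..<n} - g) = GG n psi g"
  unfolding GG_def
proof (intro sum.cong refl)
  fix p assume "p \<in> Pow {..<n} \<times> Pow {..<n}"
  then have "sw ({..<n} - g) p = (snd (sw g p), fst (sw g p))"
    unfolding sw_def by auto
  then show "Phi psi (sw ({..<n} - g) p) * cnj (Phi psi p) = Phi psi (sw g p) * cnj (Phi psi p)"
    by (simp add: Phi_def mult.commute)
qed


definition sd :: "nat set \<Rightarrow> nat set \<Rightarrow> nat set" where
  "sd a b = (a - b) \<union> (b - a)"

lemma sw_comp: "sw a (sw b p) = sw (sd a b) p"
  unfolding sw_def sd_def by (cases p) auto

lemma sw_self: "sw b (sw b p) = p"
  unfolding sw_def by (cases p) auto

lemma sd_sd1: "sd (sd a b) b = a" unfolding sd_def by auto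
lemma sd_sd2: "sd a (sd a b) = b" unfolding sd_def by auto

lemma sw_sd_back: "sw (sd a b) (sw b q) = sw a q"
  by (simp add: sw_comp sd_sd1)

lemma sw_Pow: "p \<in> Pow N \<times> Pow N \<Longrightarrow> sw g p \<in> Pow N \<times> Pow N"
  unfolding sw_def by auto

lemma sd_sub: "a \<subseteq> N \<Longrightarrow> b \<subseteq> N \<Longrightarrow> sd a b \<subseteq> N"
  unfolding sd_def by auto

lemma sd_Pow: "a \<in> Pow N \<Longrightarrow> b \<in> Pow N \<Longrightarrow> sd a b \<in> Pow N"
  unfolding sd_def by auto

lemma neg1_card_prod:
  assumes "finite T"
  shows "(-1::'c::comm_ring_1) ^ card (X \<inter> T) = (\<Prod>k\<in>T. if k \<in> X then -1 else 1)"
  using prod_if_pow[OF assms, of X "-1::'c"] by (simp add: Int_commute)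

lemma parity_sd:
  assumes "finite T"
  shows "(-1::'c::comm_ring_1) ^ card (sd a g \<inter> T) = (-1) ^ card (a \<inter> T) * (-1) ^ card (g \<inter> T)"
  unfolding neg1_card_prod[OF assms] prod.distrib[symmetric]
  by (intro prod.cong refl) (auto simp: sd_def)

definition QQ :: "nat \<Rightarrow> (nat set \<Rightarrow> complex) \<Rightarrow> nat set \<Rightarrow> nat set \<times> nat set \<Rightarrow> complex" where
  "QQ n psi T p = (\<Sum>a\<in>Pow {..<n}. (-1) ^ card (a \<inter> T) * Phi psi (sw a p))"

lemma QQ_sos:
  assumes T: "T \<subseteq> {..<n}"
  shows "complex_of_real (\<Sum>p\<in>Pow {..<n} \<times> Pow {..<n}. (cmod (QQ n psi T p))^2)
       = 2 ^ n * (\<Sum>g\<in>Pow {..<n}. (-1) ^ card (g \<inter> T) * GG n psi g)"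
proof -
  let ?U = "Pow {..<n}"
  let ?s = "\<lambda>a. (-1::complex) ^ card (a \<inter> T)"
  have fT: "finite T" using T finite_subset by blast
  have "complex_of_real (\<Sum>p\<in>?U \<times> ?U. (cmod (QQ n psi T p))^2)
      = (\<Sum>p\<in>?U \<times> ?U. QQ n psi T p * cnj (QQ n psi T p))"
    by (simp only: of_real_sum complex_norm_square)
  also have "\<dots> = (\<Sum>p\<in>?U \<times> ?U. \<Sum>a\<in>?U. \<Sum>b\<in>?U.
        ?s a * ?s b * (Phi psi (sw a p) * cnj (Phi psi (sw b p))))"
    unfolding QQ_def by (simp add: sum_product cnj_sum algebra_simps)
  also have "\<dots> = (\<Sum>a\<in>?U. \<Sum>b\<in>?U. \<Sum>p\<in>?U \<times> ?U.
        ?s a * ?s b * (Phi psi (sw a p) * cnj (Phi psi (sw b p))))"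
    by (subst sum.swap) (simp add: sum.swap[of _ "?U \<times> ?U"])
  also have "\<dots> = (\<Sum>a\<in>?U. \<Sum>b\<in>?U. ?s a * ?s b * GG n psi (sd a b))"
  proof (intro sum.cong refl)
    fix a b assume "a \<in> ?U" "b \<in> ?U"
    have "(\<Sum>p\<in>?U \<times> ?U. Phi psi (sw a p) * cnj (Phi psi (sw b p)))
        = (\<Sum>q\<in>?U \<times> ?U. Phi psi (sw (sd a b) q) * cnj (Phi psi q))"
      by (rule sum.reindex_bij_witness[where i="sw b" and j="sw b"])
         (auto simp: sw_sd_back sw_Pow sw_self)
    then show "(\<Sum>p\<in>?U \<times> ?U. ?s a * ?s b * (Phi psi (sw a p) * cnj (Phi psi (sw b p))))
        = ?s a * ?s b * GG n psi (sd a b)"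
      unfolding GG_def by (simp add: sum_distrib_left[symmetric])
  qed
  also have "\<dots> = (\<Sum>a\<in>?U. \<Sum>g\<in>?U. ?s g * GG n psi g)"
  proof (rule sum.cong[OF refl])
    fix a assume a: "a \<in> ?U"
    have "(\<Sum>b\<in>?U. ?s a * ?s b * GG n psi (sd a b))
        = (\<Sum>g\<in>?U. ?s a * ?s (sd a g) * GG n psi (sd a (sd a g)))"
      by (rule sum.reindex_bij_witness[where i="sd a" and j="sd a"])
         (use a in \<open>simp_all add: sd_sd2 sd_sub\<close>)
    also have "\<dots> = (\<Sum>g\<in>?U. ?s g * GG n psi g)"
    proof (intro sum.cong refl)
      fix g
      have "?s a * ?s a = 1" by (simp add: power_mult_distrib[symmetric])
      then show "?s a * ?s (sd a g) * GG n psi (sd a (sd a g)) = ?s g * GG n psi g"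
        by (simp add: parity_sd[OF fT] sd_sd2 mult.assoc[symmetric])
    qed
    finally show "(\<Sum>b\<in>?U. ?s a * ?s b * GG n psi (sd a b)) = (\<Sum>g\<in>?U. ?s g * GG n psi g)" .
  qed
  also have "\<dots> = 2 ^ n * (\<Sum>g\<in>?U. ?s g * GG n psi g)"
    by (simp add: card_Pow)
  finally show ?thesis .
qed


definition ee :: "nat \<Rightarrow> (nat set \<Rightarrow> complex) \<Rightarrow> nat set \<Rightarrow> nat set \<Rightarrow> complex" where
  "ee n psi x z = (\<Sum>u\<in>Pow {..<n}. cnj (psi u) * (-1) ^ card (u \<inter> z) * psi (sd u x))"

lemma split_sum2:
  assumes "al \<subseteq> N" "finite N"
  shows "(\<Sum>u\<in>Pow N. \<Sum>u'\<in>Pow N. H u u') =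
    (\<Sum>a\<in>Pow al. \<Sum>b\<in>Pow (N - al). \<Sum>a'\<in>Pow al. \<Sum>b'\<in>Pow (N - al). H (a \<union> b) (a' \<union> b'))"
proof -
  have "(\<Sum>u\<in>Pow N. \<Sum>u'\<in>Pow N. H u u') = (\<Sum>a\<in>Pow al. \<Sum>b\<in>Pow (N - al). \<Sum>u'\<in>Pow N. H (a \<union> b) u')"
    by (rule split_sum[OF assms])
  also have "\<dots> = (\<Sum>a\<in>Pow al. \<Sum>b\<in>Pow (N - al). \<Sum>a'\<in>Pow al. \<Sum>b'\<in>Pow (N - al). H (a \<union> b) (a' \<union> b'))"
    by (rule sum.cong[OF refl], rule sum.cong[OF refl], rule split_sum[OF assms])
  finally show ?thesis .
qed

lemma delta_help:
  assumes "finite A" "a \<in> A"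
  shows "(\<Sum>a'\<in>A. \<Sum>b\<in>B. if a = a' then f a' b else 0) = (\<Sum>b\<in>B. f a b)"
proof -
  have "(\<Sum>a'\<in>A. \<Sum>b\<in>B. if a = a' then f a' b else 0) = (\<Sum>a'\<in>A. if a = a' then (\<Sum>b\<in>B. f a' b) else 0)"
    by (intro sum.cong refl) auto
  also have "\<dots> = (\<Sum>b\<in>B. f a b)" using assms by simp
  finally show ?thesis .
qed

lemma zsum:
  assumes "finite al"
  fixes u u' :: "nat set"
  shows "(\<Sum>z\<in>Pow al. (-1::complex) ^ card (u \<inter> z) * (-1) ^ card (u' \<inter> z))
       = (if u \<inter> al = u' \<inter> al then 2 ^ card al else 0)"
proof -
  have "(\<Sum>z\<in>Pow al. (-1::complex) ^ card (u \<inter> z) * (-1) ^ card (u' \<inter> z))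
      = (\<Sum>z\<in>Pow al. (-1::complex) ^ card (z \<inter> sd u u'))"
  proof (rule sum.cong[OF refl])
    fix z assume "z \<in> Pow al"
    then have fz: "finite z" using assms finite_subset by auto
    show "(-1::complex) ^ card (u \<inter> z) * (-1) ^ card (u' \<inter> z) = (-1) ^ card (z \<inter> sd u u')"
      using parity_sd[OF fz, of u u'] by (metis Int_commute)
  qed
  also have "\<dots> = (if al \<inter> sd u u' = {} then 2 ^ card al else 0)"
    by (rule char_sum[OF assms])
  also have "(al \<inter> sd u u' = {}) = (u \<inter> al = u' \<inter> al)"
    unfolding sd_def by auto
  finally show ?thesis .
qed

lemma ee_quad:
  assumes al: "al \<subseteq> {..<n}"
  shows "(\<Sum>x\<in>Pow al. \<Sum>z\<in>Pow al. complex_of_real ((cmod (ee n psi x z))^2))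
       = 2 ^ card al * quad n psi al"
proof -
  let ?N = "{..<n}"
  let ?U = "Pow ?N"
  let ?F = "\<lambda>x u u'. cnj (psi u) * psi (sd u x) * psi u' * cnj (psi (sd u' x))"
  have fal: "finite al" using al finite_subset by blast
  have "(\<Sum>x\<in>Pow al. \<Sum>z\<in>Pow al. complex_of_real ((cmod (ee n psi x z))^2))
      = (\<Sum>x\<in>Pow al. \<Sum>z\<in>Pow al. \<Sum>u\<in>?U. \<Sum>u'\<in>?U.
           ?F x u u' * ((-1) ^ card (u \<inter> z) * (-1) ^ card (u' \<inter> z)))"
  proof (intro sum.cong refl)
    fix x z
    show "complex_of_real ((cmod (ee n psi x z))^2) = (\<Sum>u\<in>?U. \<Sum>u'\<in>?U.
           ?F x u u' * ((-1) ^ card (u \<inter> z) * (-1) ^ card (u' \<inter> z)))"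
      unfolding complex_norm_square ee_def sum_product cnj_sum
      by ((simp add: algebra_simps; fail) | (subst sum.swap, simp add: algebra_simps))
  qed
  also have "\<dots> = (\<Sum>x\<in>Pow al. \<Sum>u\<in>?U. \<Sum>u'\<in>?U.
           ?F x u u' * (\<Sum>z\<in>Pow al. (-1) ^ card (u \<inter> z) * (-1) ^ card (u' \<inter> z)))"
  proof (rule sum.cong[OF refl])
    fix x
    show "(\<Sum>z\<in>Pow al. \<Sum>u\<in>?U. \<Sum>u'\<in>?U.
           ?F x u u' * ((-1) ^ card (u \<inter> z) * (-1) ^ card (u' \<inter> z)))
        = (\<Sum>u\<in>?U. \<Sum>u'\<in>?U.
           ?F x u u' * (\<Sum>z\<in>Pow al. (-1) ^ card (u \<inter> z) * (-1) ^ card (u' \<inter> z)))"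
      by (simp add: sum_distrib_left sum.swap[of _ "Pow al"])
  qed
  also have "\<dots> = (\<Sum>x\<in>Pow al. \<Sum>u\<in>?U. \<Sum>u'\<in>?U.
           (if u \<inter> al = u' \<inter> al then 2 ^ card al * ?F x u u' else 0))"
    by (intro sum.cong refl) (simp add: zsum[OF fal])
  also have "\<dots> = (\<Sum>x\<in>Pow al. \<Sum>a\<in>Pow al. \<Sum>b\<in>Pow (?N - al). \<Sum>a'\<in>Pow al. \<Sum>b'\<in>Pow (?N - al).
           (if a = a' then 2 ^ card al * ?F x (a \<union> b) (a' \<union> b') else 0))"
  proof -
    have *: "(a \<union> b) \<inter> al = a" if "a \<in> Pow al" "b \<in> Pow (?N - al)" for a b
      using that by auto
    show ?thesis
      unfolding split_sum2[OF al finite_lessThan]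
      by (intro sum.cong refl) (simp add: *)
  qed
  also have "\<dots> = (\<Sum>x\<in>Pow al. \<Sum>a\<in>Pow al. \<Sum>b\<in>Pow (?N - al). \<Sum>b'\<in>Pow (?N - al).
           2 ^ card al * ?F x (a \<union> b) (a \<union> b'))"
    using fal by (simp add: delta_help)
  also have "\<dots> = (\<Sum>a\<in>Pow al. \<Sum>x\<in>Pow al. \<Sum>b\<in>Pow (?N - al). \<Sum>b'\<in>Pow (?N - al).
           2 ^ card al * ?F x (a \<union> b) (a \<union> b'))"
    by (rule sum.swap)
  also have "\<dots> = (\<Sum>a\<in>Pow al. \<Sum>x\<in>Pow al. \<Sum>b\<in>Pow (?N - al). \<Sum>b'\<in>Pow (?N - al).
           2 ^ card al * (cnj (psi (a \<union> b)) * psi (sd a x \<union> b) * psi (a \<union> b') * cnj (psi (sd a x \<union> b'))))"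
  proof (intro sum.cong refl)
    fix a x b b' assume "a \<in> Pow al" "x \<in> Pow al" "b \<in> Pow (?N - al)" "b' \<in> Pow (?N - al)"
    then have "sd (a \<union> b) x = sd a x \<union> b" "sd (a \<union> b') x = sd a x \<union> b'"
      unfolding sd_def by auto
    then show "2 ^ card al * ?F x (a \<union> b) (a \<union> b') =
       2 ^ card al * (cnj (psi (a \<union> b)) * psi (sd a x \<union> b) * psi (a \<union> b') * cnj (psi (sd a x \<union> b')))"
      by simp
  qed
  also have "\<dots> = (\<Sum>a\<in>Pow al. \<Sum>a'\<in>Pow al. \<Sum>b\<in>Pow (?N - al). \<Sum>b'\<in>Pow (?N - al).
           2 ^ card al * (cnj (psi (a \<union> b)) * psi (a' \<union> b) * psi (a \<union> b') * cnj (psi (a' \<union> b'))))"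
  proof (rule sum.cong[OF refl])
    fix a assume a: "a \<in> Pow al"
    show "(\<Sum>x\<in>Pow al. \<Sum>b\<in>Pow (?N - al). \<Sum>b'\<in>Pow (?N - al).
           2 ^ card al * (cnj (psi (a \<union> b)) * psi (sd a x \<union> b) * psi (a \<union> b') * cnj (psi (sd a x \<union> b'))))
        = (\<Sum>a'\<in>Pow al. \<Sum>b\<in>Pow (?N - al). \<Sum>b'\<in>Pow (?N - al).
           2 ^ card al * (cnj (psi (a \<union> b)) * psi (a' \<union> b) * psi (a \<union> b') * cnj (psi (a' \<union> b'))))"
      by (rule sum.reindex_bij_witness[where i="sd a" and j="sd a"])
         (use a in \<open>auto simp: sd_sd2 sd_def\<close>)
  qed
  also have "\<dots> = (\<Sum>a'\<in>Pow al. \<Sum>a\<in>Pow al. \<Sum>b\<in>Pow (?N - al). \<Sum>b'\<in>Pow (?N - al).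
           2 ^ card al * (cnj (psi (a \<union> b)) * psi (a' \<union> b) * psi (a \<union> b') * cnj (psi (a' \<union> b'))))"
    by (rule sum.swap)
  also have "\<dots> = 2 ^ card al * quad n psi al"
    unfolding quad_def sum_distrib_left
    by (intro sum.cong refl) (simp add: algebra_simps)
  finally show ?thesis .
qed


definition EE :: "nat \<Rightarrow> (nat set \<Rightarrow> complex) \<Rightarrow> nat set \<Rightarrow> nat set \<Rightarrow> real" where
  "EE n psi x z = (cmod (ee n psi x z))^2"

definition xT :: "nat \<Rightarrow> (nat set \<Rightarrow> complex) \<Rightarrow> nat set \<Rightarrow> real" where
  "xT n psi T = (\<Sum>g\<in>Pow {..<n}. (-1) ^ card (g \<inter> T) * purity n psi g) / 2 ^ n"

lemma Re_neg1_mult: "Re ((-1::complex) ^ k * z) = (-1) ^ k * Re z"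
  by (cases "even k") auto

lemma purity_EE:
  assumes "g \<subseteq> {..<n}"
  shows "purity n psi g = (\<Sum>x\<in>Pow g. \<Sum>z\<in>Pow g. EE n psi x z) / 2 ^ card g"
proof -
  have "Re (\<Sum>x\<in>Pow g. \<Sum>z\<in>Pow g. complex_of_real ((cmod (ee n psi x z))^2))
      = Re (2 ^ card g * quad n psi g)"
    using ee_quad[OF assms] by simp
  then have "(\<Sum>x\<in>Pow g. \<Sum>z\<in>Pow g. EE n psi x z) = 2 ^ card g * purity n psi g"
    unfolding EE_def purity_quad by simp
  then show ?thesis by (simp add: field_simps)
qed

lemma purity_compl:
  assumes "g \<subseteq> {..<n}"
  shows "purity n psi ({..<n} - g) = purity n psi g"
  unfolding purity_quad
  using GG_quad[OF assms, of psi] GG_quad[of "{..<n} - g" n psi] GG_compl[OF assms, of psi]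
  by auto

lemma xT_nonneg:
  assumes T: "T \<subseteq> {..<n}"
  shows "xT n psi T \<ge> 0"
proof -
  have "Re (complex_of_real (\<Sum>p\<in>Pow {..<n} \<times> Pow {..<n}. (cmod (QQ n psi T p))^2))
      = Re (2 ^ n * (\<Sum>g\<in>Pow {..<n}. (-1) ^ card (g \<inter> T) * GG n psi g))"
    using QQ_sos[OF T, of psi] by simp
  also have "\<dots> = 2 ^ n * (\<Sum>g\<in>Pow {..<n}. (-1) ^ card (g \<inter> T) * purity n psi g)"
    by (simp add: Re_sum Re_neg1_mult purity_quad GG_quad)
  finally have "(\<Sum>g\<in>Pow {..<n}. (-1) ^ card (g \<inter> T) * purity n psi g)
      = (\<Sum>p\<in>Pow {..<n} \<times> Pow {..<n}. (cmod (QQ n psi T p))^2) / 2 ^ n"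
    by (simp add: field_simps)
  then show ?thesis unfolding xT_def by (simp add: sum_nonneg)
qed

lemma diff_diff_sub: "g \<subseteq> N \<Longrightarrow> N - (N - g) = g" by auto

lemma xT_parity:
  assumes T: "T \<subseteq> {..<n}"
  shows "xT n psi T = (-1) ^ card T * xT n psi T"
proof -
  let ?N = "{..<n}"
  have fT: "finite T" using T finite_subset by blast
  have "(\<Sum>g\<in>Pow ?N. (-1) ^ card (g \<inter> T) * purity n psi g)
      = (\<Sum>g\<in>Pow ?N. (-1) ^ card ((?N - g) \<inter> T) * purity n psi (?N - g))"
    by (rule sum.reindex_bij_witness[where i="\<lambda>g. ?N - g" and j="\<lambda>g. ?N - g"])
       (auto simp: diff_diff_sub)
  also have "\<dots> = (\<Sum>g\<in>Pow ?N. (-1) ^ card T * ((-1) ^ card (g \<inter> T) * purity n psi g))"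
  proof (rule sum.cong[OF refl])
    fix g assume g: "g \<in> Pow ?N"
    have "(-1::real) ^ card ((?N - g) \<inter> T) = (\<Prod>k\<in>T. (-1) * (if k \<in> g then -1 else 1))"
      unfolding neg1_card_prod[OF fT] using T by (intro prod.cong refl) auto
    also have "\<dots> = (-1) ^ card T * (-1) ^ card (g \<inter> T)"
      unfolding neg1_card_prod[OF fT] prod.distrib by simp
    finally show "(-1) ^ card ((?N - g) \<inter> T) * purity n psi (?N - g)
        = (-1) ^ card T * ((-1) ^ card (g \<inter> T) * purity n psi g)"
      using purity_compl[of g n psi] g by simp
  qed
  finally show ?thesis unfolding xT_def by (simp add: sum_distrib_left[symmetric])
qed

lemma purity_empty:
  assumes "pure_state n psi"
  shows "purity n psi {} = 1"
proof -
  have "reduced_state n psi {} {} {} = (\<Sum>b\<in>Pow {..<n}. complex_of_real ((cmod (psi b))^2))"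
    unfolding reduced_state_def by (simp add: complex_norm_square del: of_real_power)
  also have "\<dots> = 1" using assms unfolding pure_state_def of_real_sum[symmetric] by simp
  finally show ?thesis unfolding purity_def by simp
qed

lemma xT_sum:
  assumes "pure_state n psi"
  shows "(\<Sum>T\<in>Pow {..<n}. xT n psi T) = 1"
proof -
  let ?N = "{..<n}"
  have "(\<Sum>T\<in>Pow ?N. xT n psi T)
      = (\<Sum>g\<in>Pow ?N. purity n psi g * (\<Sum>T\<in>Pow ?N. (-1) ^ card (T \<inter> g))) / 2 ^ n"
    unfolding xT_def sum_divide_distrib[symmetric]
    by (subst sum.swap) (simp add: sum_distrib_left Int_commute mult.commute)
  also have "\<dots> = (\<Sum>g\<in>Pow ?N. if g = {} then purity n psi g * 2 ^ n else 0) / 2 ^ n"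
  proof -
    have "(\<Sum>g\<in>Pow ?N. purity n psi g * (\<Sum>T\<in>Pow ?N. (-1) ^ card (T \<inter> g)))
        = (\<Sum>g\<in>Pow ?N. if g = {} then purity n psi g * 2 ^ n else 0)"
    proof (rule sum.cong[OF refl])
      fix g assume "g \<in> Pow ?N"
      then have "(?N \<inter> g = {}) = (g = {})" by auto
      then show "purity n psi g * (\<Sum>T\<in>Pow ?N. (-1) ^ card (T \<inter> g))
          = (if g = {} then purity n psi g * 2 ^ n else 0)"
        by (simp add: char_sum)
    qed
    then show ?thesis by simp
  qed
  also have "\<dots> = purity n psi {}"
    by (simp add: sum.delta')
  also have "\<dots> = 1" by (rule purity_empty[OF assms])
  finally show ?thesis .
qed


lemma card_split_sets:
  assumes T: "T \<subseteq> N" and fN: "finite N" and ji: "j \<le> i"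
  shows "card {S. S \<in> Pow N \<and> card S = i \<and> card (S \<inter> T) = j}
       = (card T choose j) * (card (N - T) choose (i - j))"
proof -
  have fT: "finite T" using T fN finite_subset by blast
  let ?A = "{A. A \<subseteq> T \<and> card A = j}"
  let ?B = "{B. B \<subseteq> N - T \<and> card B = i - j}"
  let ?f = "\<lambda>(A,B). A \<union> B"
  have inj: "inj_on ?f (?A \<times> ?B)"
    by (auto simp: inj_on_def)
  have im: "?f ` (?A \<times> ?B) = {S. S \<in> Pow N \<and> card S = i \<and> card (S \<inter> T) = j}"
  proof
    show "?f ` (?A \<times> ?B) \<subseteq> {S. S \<in> Pow N \<and> card S = i \<and> card (S \<inter> T) = j}"
    proof
      fix S assume "S \<in> ?f ` (?A \<times> ?B)"
      then obtain A B where AB: "A \<subseteq> T" "card A = j" "B \<subseteq> N - T" "card B = i - j" "S = A \<union> B"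
        by auto
      have fA: "finite A" using AB fT finite_subset by blast
      have fB: "finite B" using AB fN finite_subset by blast
      have "card S = i" using AB fA fB ji by (subst AB(5), subst card_Un_disjoint) auto
      moreover have "S \<inter> T = A" using AB by auto
      ultimately show "S \<in> {S. S \<in> Pow N \<and> card S = i \<and> card (S \<inter> T) = j}"
        using AB T by auto
    qed
    show "{S. S \<in> Pow N \<and> card S = i \<and> card (S \<inter> T) = j} \<subseteq> ?f ` (?A \<times> ?B)"
    proof
      fix S assume S: "S \<in> {S. S \<in> Pow N \<and> card S = i \<and> card (S \<inter> T) = j}"
      have fS: "finite S" using S fN finite_subset by auto
      have "card S = card (S \<inter> T) + card (S - T)"
        using fS by (metis Int_Diff_Un Int_Diff_disjoint card_Un_disjoint finite_Diff finite_Int)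
      then have "card (S - T) = i - j" using S by auto
      then have "(S \<inter> T, S - T) \<in> ?A \<times> ?B" using S by auto
      moreover have "S = ?f (S \<inter> T, S - T)" by auto
      ultimately show "S \<in> ?f ` (?A \<times> ?B)" by blast
    qed
  qed
  have "card {S. S \<in> Pow N \<and> card S = i \<and> card (S \<inter> T) = j} = card (?A \<times> ?B)"
    using card_image[OF inj] im by simp
  also have "\<dots> = card ?A * card ?B" by (rule card_cartesian_product)
  also have "\<dots> = (card T choose j) * (card (N - T) choose (i - j))"
    using n_subsets[OF fT] n_subsets[of "N - T"] fN by simp
  finally show ?thesis .
qed

lemma kraw_sets:
  assumes T: "T \<subseteq> {..<n}"
  shows "kraw n i (card T) = (\<Sum>S\<in>{S. S \<in> Pow {..<n} \<and> card S = i}. (-1) ^ card (S \<inter> T) * 3 ^ card (S - T))"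
proof -
  let ?N = "{..<n}"
  let ?A = "{S. S \<in> Pow ?N \<and> card S = i}"
  have fA: "finite ?A" by simp
  have cNT: "card (?N - T) = n - card T"
    using T by (simp add: card_Diff_subset finite_subset)
  have "(\<Sum>S\<in>?A. (-1::real) ^ card (S \<inter> T) * 3 ^ card (S - T))
      = (\<Sum>j\<in>{0..i}. \<Sum>S\<in>{S. S \<in> ?A \<and> card (S \<inter> T) = j}. (-1::real) ^ card (S \<inter> T) * 3 ^ card (S - T))"
  proof (rule sum.group[symmetric])
    show "finite ?A" by simp
    show "finite {0..i}" by simp
    show "(\<lambda>S. card (S \<inter> T)) ` ?A \<subseteq> {0..i}"
    proof
      fix j assume "j \<in> (\<lambda>S. card (S \<inter> T)) ` ?A"
      then obtain S where "S \<in> ?A" "j = card (S \<inter> T)" by auto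
      then show "j \<in> {0..i}" using card_mono[of S "S \<inter> T"] finite_subset[of S ?N] by auto
    qed
  qed
  also have "\<dots> = (\<Sum>j\<in>{0..i}. real (card {S. S \<in> Pow ?N \<and> card S = i \<and> card (S \<inter> T) = j}) * ((-1) ^ j * 3 ^ (i - j)))"
  proof (rule sum.cong[OF refl])
    fix j assume "j \<in> {0..i}"
    have "(\<Sum>S\<in>{S. S \<in> ?A \<and> card (S \<inter> T) = j}. (-1::real) ^ card (S \<inter> T) * 3 ^ card (S - T))
        = (\<Sum>S\<in>{S. S \<in> Pow ?N \<and> card S = i \<and> card (S \<inter> T) = j}. (-1) ^ j * 3 ^ (i - j))"
    proof (rule sum.cong)
      show "{S. S \<in> ?A \<and> card (S \<inter> T) = j} = {S. S \<in> Pow ?N \<and> card S = i \<and> card (S \<inter> T) = j}"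
        by auto
      fix S assume S: "S \<in> {S. S \<in> Pow ?N \<and> card S = i \<and> card (S \<inter> T) = j}"
      have fS: "finite S" using S finite_subset by auto
      have "card S = card (S \<inter> T) + card (S - T)"
        using fS by (metis Int_Diff_Un Int_Diff_disjoint card_Un_disjoint finite_Diff finite_Int)
      then have "card (S - T) = i - j" using S by auto
      then show "(-1::real) ^ card (S \<inter> T) * 3 ^ card (S - T) = (-1) ^ j * 3 ^ (i - j)"
        using S by simp
    qed
    then show "(\<Sum>S\<in>{S. S \<in> ?A \<and> card (S \<inter> T) = j}. (-1::real) ^ card (S \<inter> T) * 3 ^ card (S - T))
        = real (card {S. S \<in> Pow ?N \<and> card S = i \<and> card (S \<inter> T) = j}) * ((-1) ^ j * 3 ^ (i - j))"
      by simp
  qed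
  also have "\<dots> = kraw n i (card T)"
  proof -
    have cs: "real (card {S. S \<subseteq> {..<n} \<and> card S = i \<and> card (S \<inter> T) = j})
        = real (card T choose j) * real ((n - card T) choose (i - j))" if "j \<le> i" for j
      using card_split_sets[OF T finite_lessThan that] cNT by simp
    show ?thesis unfolding kraw_def
      by (intro sum.cong refl) (simp add: cs)
  qed
  finally show ?thesis ..
qed

lemma group_even:
  "(\<Sum>j=0..n div 2. \<Sum>T\<in>{T. T \<in> Pow {..<n} \<and> card T = 2 * j}. g T)
    = (\<Sum>T\<in>Pow {..<n}. if even (card T) then g T else 0)"
proof -
  let ?E = "{T. T \<in> Pow {..<n} \<and> even (card T)}"
  have "(\<Sum>T\<in>Pow {..<n}. if even (card T) then g T else 0) = (\<Sum>T\<in>?E. g T)"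
    using sum.inter_filter[of "Pow {..<n}" g "\<lambda>T. even (card T)"] by simp
  also have "\<dots> = (\<Sum>j\<in>{0..n div 2}. \<Sum>T\<in>{T. T \<in> ?E \<and> card T div 2 = j}. g T)"
  proof (rule sum.group[symmetric])
    show "finite ?E" by simp
    show "finite {0..n div 2}" by simp
    show "(\<lambda>T. card T div 2) ` ?E \<subseteq> {0..n div 2}"
    proof
      fix j assume "j \<in> (\<lambda>T. card T div 2) ` ?E"
      then obtain T where "T \<in> ?E" "j = card T div 2" by auto
      then have "card T \<le> n" using card_mono[of "{..<n}" T] by auto
      then show "j \<in> {0..n div 2}" using \<open>j = card T div 2\<close> by (simp add: div_le_mono)
    qed
  qed
  also have "\<dots> = (\<Sum>j=0..n div 2. \<Sum>T\<in>{T. T \<in> Pow {..<n} \<and> card T = 2 * j}. g T)"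
  proof (rule sum.cong[OF refl])
    fix j
    have "{T. T \<in> ?E \<and> card T div 2 = j} = {T. T \<in> Pow {..<n} \<and> card T = 2 * j}"
      by auto
    then show "(\<Sum>T\<in>{T. T \<in> ?E \<and> card T div 2 = j}. g T) = (\<Sum>T\<in>{T. T \<in> Pow {..<n} \<and> card T = 2 * j}. g T)"
      by simp
  qed
  finally show ?thesis ..
qed


definition FF :: "nat \<Rightarrow> nat set \<Rightarrow> nat set \<Rightarrow> nat set \<Rightarrow> real" where
  "FF n S g T = (-1) ^ card T * (-1) ^ card (S \<inter> T) * 3 ^ card (S - T) / 3 ^ (n - card T)
      * (-1) ^ card (g \<inter> T) / 2 ^ card g"

definition hh :: "bool \<Rightarrow> bool \<Rightarrow> real" where
  "hh s m = (-1) * (if s then -1 else 1) * (if m then -1 else 1) + (if s then 3 else 1) / 3"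

lemma FF_Tsum:
  assumes S: "S \<subseteq> {..<n}"
  shows "(\<Sum>T\<in>Pow {..<n}. FF n S g T) = (\<Prod>k\<in>{..<n}. hh (k \<in> S) (k \<in> g)) / 2 ^ card g"
proof -
  let ?N = "{..<n}"
  let ?f = "\<lambda>k. (-1) * (if k \<in> S then -1 else 1) * (if k \<in> g then -1 else (1::real))"
  let ?g = "\<lambda>k. (if k \<in> S then 3 else 1) / (3::real)"
  have "(\<Sum>T\<in>Pow ?N. FF n S g T) = (\<Sum>T\<in>Pow ?N. ((\<Prod>k\<in>T. ?f k) * (\<Prod>k\<in>?N - T. ?g k)) / 2 ^ card g)"
  proof (rule sum.cong[OF refl])
    fix T assume T: "T \<in> Pow ?N"
    have fT: "finite T" using T finite_subset by auto
    have fNT: "finite (?N - T)" by simp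
    have p1: "(\<Prod>k\<in>T. ?f k) = (-1) ^ card T * (-1) ^ card (S \<inter> T) * (-1) ^ card (g \<inter> T)"
      unfolding neg1_card_prod[OF fT] prod.distrib by simp
    have "(\<Prod>k\<in>?N - T. ?g k) = (\<Prod>k\<in>?N - T. (if k \<in> S then 3 else 1)) * (\<Prod>k\<in>?N - T. 1/3)"
      unfolding prod.distrib[symmetric] by (intro prod.cong refl) simp
    also have "\<dots> = 3 ^ card (S - T) / 3 ^ (n - card T)"
    proof -
      have "(\<Prod>k\<in>?N - T. (if k \<in> S then 3 else 1)) = (3::real) ^ card ((?N - T) \<inter> S)"
        by (rule prod_if_pow[OF fNT])
      moreover have "(?N - T) \<inter> S = S - T" using S by auto
      moreover have "card (?N - T) = n - card T" using T by (simp add: card_Diff_subset fT)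
      ultimately show ?thesis by (simp add: power_one_over)
    qed
    finally have p2: "(\<Prod>k\<in>?N - T. ?g k) = 3 ^ card (S - T) / 3 ^ (n - card T)" .
    show "FF n S g T = ((\<Prod>k\<in>T. ?f k) * (\<Prod>k\<in>?N - T. ?g k)) / 2 ^ card g"
      unfolding p1 p2 FF_def by simp
  qed
  also have "\<dots> = (\<Sum>T\<in>Pow ?N. (\<Prod>k\<in>T. ?f k) * (\<Prod>k\<in>?N - T. ?g k)) / 2 ^ card g"
    by (simp add: sum_divide_distrib)
  also have "\<dots> = (\<Prod>k\<in>?N. ?f k + ?g k) / 2 ^ card g"
    by (simp add: sum_pow_prod)
  also have "\<dots> = (\<Prod>k\<in>?N. hh (k \<in> S) (k \<in> g)) / 2 ^ card g"
    unfolding hh_def by simp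
  finally show ?thesis .
qed

lemma coef_nonneg:
  assumes S: "S \<subseteq> {..<n}" and B: "B \<subseteq> {..<n}"
  shows "(\<Sum>g\<in>Pow {..<n}. if B \<subseteq> g then (\<Sum>T\<in>Pow {..<n}. FF n S g T) else 0) \<ge> 0"
proof -
  let ?N = "{..<n}"
  let ?a = "\<lambda>k. hh (k \<in> S) True / 2"
  let ?b = "\<lambda>k. if k \<in> B then 0 else hh (k \<in> S) False"
  have "(\<Sum>g\<in>Pow ?N. if B \<subseteq> g then (\<Sum>T\<in>Pow ?N. FF n S g T) else 0)
      = (\<Sum>g\<in>Pow ?N. (\<Prod>k\<in>g. ?a k) * (\<Prod>k\<in>?N - g. ?b k))"
  proof (rule sum.cong[OF refl])
    fix g assume g: "g \<in> Pow ?N"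
    have fg: "finite g" using g finite_subset by auto
    have "(\<Sum>T\<in>Pow ?N. FF n S g T) = (\<Prod>k\<in>?N. hh (k \<in> S) (k \<in> g)) / 2 ^ card g"
      by (rule FF_Tsum[OF S])
    also have "(\<Prod>k\<in>?N. hh (k \<in> S) (k \<in> g)) = (\<Prod>k\<in>?N - g. hh (k \<in> S) (k \<in> g)) * (\<Prod>k\<in>g. hh (k \<in> S) (k \<in> g))"
      using g by (intro prod.subset_diff) auto
    also have "(\<Prod>k\<in>?N - g. hh (k \<in> S) (k \<in> g)) = (\<Prod>k\<in>?N - g. hh (k \<in> S) False)"
      by (intro prod.cong refl) auto
    also have "(\<Prod>k\<in>g. hh (k \<in> S) (k \<in> g)) = (\<Prod>k\<in>g. hh (k \<in> S) True)"
      by (intro prod.cong refl) auto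
    finally have e1: "(\<Sum>T\<in>Pow ?N. FF n S g T) = (\<Prod>k\<in>?N - g. hh (k \<in> S) False) * (\<Prod>k\<in>g. ?a k)"
      using fg by (simp add: prod_dividef power_one_over)
    show "(if B \<subseteq> g then (\<Sum>T\<in>Pow ?N. FF n S g T) else 0) = (\<Prod>k\<in>g. ?a k) * (\<Prod>k\<in>?N - g. ?b k)"
    proof (cases "B \<subseteq> g")
      case True
      then have "(\<Prod>k\<in>?N - g. ?b k) = (\<Prod>k\<in>?N - g. hh (k \<in> S) False)"
        by (intro prod.cong refl) auto
      then show ?thesis using True e1 by simp
    next
      case False
      then obtain k where "k \<in> B" "k \<notin> g" by auto
      then have "(\<Prod>k\<in>?N - g. ?b k) = 0" using B by (intro prod_zero) auto
      then show ?thesis using False by simp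
    qed
  qed
  also have "\<dots> = (\<Prod>k\<in>?N. ?a k + ?b k)"
    by (simp add: sum_pow_prod)
  also have "\<dots> \<ge> 0"
    by (intro prod_nonneg) (auto simp: hh_def)
  finally show ?thesis .
qed


lemma swap_in2: "(\<Sum>c\<in>C. \<Sum>d\<in>D. \<Sum>e\<in>E. G c d e) = (\<Sum>d\<in>D. \<Sum>e\<in>E. \<Sum>c\<in>C. G c d e)"
proof -
  have "(\<Sum>c\<in>C. \<Sum>d\<in>D. \<Sum>e\<in>E. G c d e) = (\<Sum>d\<in>D. \<Sum>c\<in>C. \<Sum>e\<in>E. G c d e)" by (rule sum.swap)
  also have "\<dots> = (\<Sum>d\<in>D. \<Sum>e\<in>E. \<Sum>c\<in>C. G c d e)" by (rule sum.cong[OF refl], rule sum.swap)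
  finally show ?thesis .
qed

lemma swap_in3: "(\<Sum>a\<in>A. \<Sum>c\<in>C. \<Sum>d\<in>D. \<Sum>e\<in>E. f a c d e) = (\<Sum>c\<in>C. \<Sum>d\<in>D. \<Sum>e\<in>E. \<Sum>a\<in>A. f a c d e)"
proof -
  have "(\<Sum>a\<in>A. \<Sum>c\<in>C. \<Sum>d\<in>D. \<Sum>e\<in>E. f a c d e) = (\<Sum>c\<in>C. \<Sum>a\<in>A. \<Sum>d\<in>D. \<Sum>e\<in>E. f a c d e)"
    by (rule sum.swap)
  also have "\<dots> = (\<Sum>c\<in>C. \<Sum>d\<in>D. \<Sum>e\<in>E. \<Sum>a\<in>A. f a c d e)"
    by (rule sum.cong[OF refl], rule swap_in2)
  finally show ?thesis .
qed

lemma swap5: "(\<Sum>a\<in>A. \<Sum>b\<in>B. \<Sum>c\<in>C. \<Sum>d\<in>D. \<Sum>e\<in>E. f a b c d e)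
   = (\<Sum>b\<in>B. \<Sum>d\<in>D. \<Sum>e\<in>E. \<Sum>c\<in>C. \<Sum>a\<in>A. f a b c d e)"
proof -
  have "(\<Sum>a\<in>A. \<Sum>b\<in>B. \<Sum>c\<in>C. \<Sum>d\<in>D. \<Sum>e\<in>E. f a b c d e)
      = (\<Sum>b\<in>B. \<Sum>a\<in>A. \<Sum>c\<in>C. \<Sum>d\<in>D. \<Sum>e\<in>E. f a b c d e)" by (rule sum.swap)
  also have "\<dots> = (\<Sum>b\<in>B. \<Sum>c\<in>C. \<Sum>d\<in>D. \<Sum>e\<in>E. \<Sum>a\<in>A. f a b c d e)"
    by (rule sum.cong[OF refl], rule swap_in3)
  also have "\<dots> = (\<Sum>b\<in>B. \<Sum>d\<in>D. \<Sum>e\<in>E. \<Sum>c\<in>C. \<Sum>a\<in>A. f a b c d e)"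
    by (rule sum.cong[OF refl], rule swap_in2)
  finally show ?thesis .
qed

lemma sum_Pow_sub:
  assumes "g \<subseteq> N" "finite N"
  shows "(\<Sum>x\<in>Pow g. f x) = (\<Sum>x\<in>Pow N. if x \<subseteq> g then f x else 0)"
proof -
  have "{x \<in> Pow N. x \<subseteq> g} = Pow g" using assms by auto
  then show ?thesis using sum.inter_filter[of "Pow N" f "\<lambda>x. x \<subseteq> g"] assms by simp
qed

lemma prod_sums:
  fixes c d e :: real
  shows "c * (\<Sum>S\<in>A. a S) * ((\<Sum>g\<in>B. b g) / d) / e = (\<Sum>S\<in>A. \<Sum>g\<in>B. c * a S * b g / d / e)"
proof -
  have "c * (\<Sum>S\<in>A. a S) * ((\<Sum>g\<in>B. b g) / d) / e = (c / (d * e)) * ((\<Sum>S\<in>A. a S) * (\<Sum>g\<in>B. b g))"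
    by simp
  also have "\<dots> = (\<Sum>S\<in>A. \<Sum>g\<in>B. (c / (d * e)) * (a S * b g))"
    unfolding sum_product by (simp only: sum_distrib_left)
  also have "\<dots> = (\<Sum>S\<in>A. \<Sum>g\<in>B. c * a S * b g / d / e)"
    by (intro sum.cong refl) simp
  finally show ?thesis .
qed

lemma V_nonneg:
  "(\<Sum>T\<in>Pow {..<n}. (-1) ^ card T * kraw n i (card T) * xT n psi T / 3 ^ (n - card T)) \<ge> 0"
proof -
  let ?N = "{..<n}"
  let ?U = "Pow ?N"
  let ?A = "{S. S \<in> Pow ?N \<and> card S = i}"
  let ?H = "\<lambda>T S g x z. if x \<subseteq> g \<and> z \<subseteq> g then FF n S g T * EE n psi x z / 2 ^ n else 0"
  have step1: "(-1) ^ card T * kraw n i (card T) * xT n psi T / 3 ^ (n - card T)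
      = (\<Sum>S\<in>?A. \<Sum>g\<in>?U. \<Sum>x\<in>?U. \<Sum>z\<in>?U. ?H T S g x z)" if T: "T \<in> ?U" for T
  proof -
    have "(-1) ^ card T * kraw n i (card T) * xT n psi T / 3 ^ (n - card T)
        = (\<Sum>S\<in>?A. \<Sum>g\<in>?U. (-1) ^ card T * ((-1) ^ card (S \<inter> T) * 3 ^ card (S - T))
             * ((-1) ^ card (g \<inter> T) * purity n psi g) / 2 ^ n / 3 ^ (n - card T))"
      unfolding kraw_sets[OF T[simplified]] xT_def
      by (rule prod_sums)
    also have "\<dots> = (\<Sum>S\<in>?A. \<Sum>g\<in>?U. \<Sum>x\<in>?U. \<Sum>z\<in>?U. ?H T S g x z)"
    proof (intro sum.cong refl)
      fix S g assume g: "g \<in> ?U"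
      have fg: "finite g" using g finite_subset by auto
      have pg: "purity n psi g = (\<Sum>x\<in>?U. \<Sum>z\<in>?U. if x \<subseteq> g \<and> z \<subseteq> g then EE n psi x z else 0) / 2 ^ card g"
      proof -
        have "purity n psi g = (\<Sum>x\<in>Pow g. \<Sum>z\<in>Pow g. EE n psi x z) / 2 ^ card g"
          using purity_EE g by auto
        also have "(\<Sum>x\<in>Pow g. \<Sum>z\<in>Pow g. EE n psi x z) = (\<Sum>x\<in>?U. if x \<subseteq> g then (\<Sum>z\<in>Pow g. EE n psi x z) else 0)"
          using g by (intro sum_Pow_sub) auto
        also have "\<dots> = (\<Sum>x\<in>?U. \<Sum>z\<in>?U. if x \<subseteq> g \<and> z \<subseteq> g then EE n psi x z else 0)"
        proof (rule sum.cong[OF refl])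
          fix x
          show "(if x \<subseteq> g then (\<Sum>z\<in>Pow g. EE n psi x z) else 0) = (\<Sum>z\<in>?U. if x \<subseteq> g \<and> z \<subseteq> g then EE n psi x z else 0)"
            using g by (simp add: sum_Pow_sub[of g ?N])
        qed
        finally show ?thesis .
      qed
      show "(-1) ^ card T * ((-1) ^ card (S \<inter> T) * 3 ^ card (S - T))
             * ((-1) ^ card (g \<inter> T) * purity n psi g) / 2 ^ n / 3 ^ (n - card T)
          = (\<Sum>x\<in>?U. \<Sum>z\<in>?U. ?H T S g x z)"
        unfolding pg FF_def
        by (simp add: sum_distrib_left sum_distrib_right sum_divide_distrib if_distrib if_distribR
                      mult_ac cong: if_cong)
    qed
    finally show ?thesis .
  qed
  have "(\<Sum>T\<in>?U. (-1) ^ card T * kraw n i (card T) * xT n psi T / 3 ^ (n - card T))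
      = (\<Sum>T\<in>?U. \<Sum>S\<in>?A. \<Sum>g\<in>?U. \<Sum>x\<in>?U. \<Sum>z\<in>?U. ?H T S g x z)"
    using step1 by (intro sum.cong refl) auto
  also have "\<dots> = (\<Sum>S\<in>?A. \<Sum>x\<in>?U. \<Sum>z\<in>?U. \<Sum>g\<in>?U. \<Sum>T\<in>?U. ?H T S g x z)"
    by (rule swap5)
  also have "\<dots> = (\<Sum>S\<in>?A. \<Sum>x\<in>?U. \<Sum>z\<in>?U. EE n psi x z / 2 ^ n *
        (\<Sum>g\<in>?U. if x \<union> z \<subseteq> g then (\<Sum>T\<in>?U. FF n S g T) else 0))"
  proof (rule sum.cong[OF refl], rule sum.cong[OF refl], rule sum.cong[OF refl])
    fix S x z
    show "(\<Sum>g\<in>?U. \<Sum>T\<in>?U. ?H T S g x z) = EE n psi x z / 2 ^ n *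
        (\<Sum>g\<in>?U. if x \<union> z \<subseteq> g then (\<Sum>T\<in>?U. FF n S g T) else 0)"
      unfolding sum_distrib_left
    proof (rule sum.cong[OF refl])
      fix g
      show "(\<Sum>T\<in>?U. ?H T S g x z) = EE n psi x z / 2 ^ n *
          (if x \<union> z \<subseteq> g then (\<Sum>T\<in>?U. FF n S g T) else 0)"
      proof (cases "x \<subseteq> g \<and> z \<subseteq> g")
        case True
        then show ?thesis by (auto simp: sum_distrib_left sum_divide_distrib mult_ac)
      next
        case False
        then have nc: "\<not> x \<union> z \<subseteq> g" by auto
        have "?H T S g x z = 0" for T by (simp only: if_not_P[OF False])
        then have l: "(\<Sum>T\<in>?U. ?H T S g x z) = 0" by simp
        have r: "(if x \<union> z \<subseteq> g then (\<Sum>T\<in>?U. FF n S g T) else 0) = 0"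
          by (simp only: if_not_P[OF nc])
        show ?thesis unfolding l r by simp
      qed
    qed
  qed
  also have "\<dots> \<ge> 0"
  proof (rule sum_nonneg, rule sum_nonneg, rule sum_nonneg, rule mult_nonneg_nonneg)
    fix S x z assume "S \<in> ?A" "x \<in> ?U" "z \<in> ?U"
    then show "0 \<le> (\<Sum>g\<in>?U. if x \<union> z \<subseteq> g then (\<Sum>T\<in>?U. FF n S g T) else 0)"
      by (intro coef_nonneg) auto
  qed (simp add: EE_def)
  finally show ?thesis .
qed


definition yv :: "nat \<Rightarrow> (nat set \<Rightarrow> complex) \<Rightarrow> nat \<Rightarrow> real" where
  "yv n psi j = (\<Sum>T\<in>{T. T \<in> Pow {..<n} \<and> card T = 2 * j}. xT n psi T) / 3 ^ (n - 2 * j)"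

lemma xT_odd:
  assumes "T \<subseteq> {..<n}" "odd (card T)"
  shows "xT n psi T = 0"
  using xT_parity[OF assms(1), of psi] assms(2) by simp

lemma yv_feasible:
  assumes pure: "pure_state n psi"
  shows "lp_feasible n (yv n psi)"
  unfolding lp_feasible_def
proof (intro conjI allI impI)
  let ?N = "{..<n}"
  fix j assume "j \<le> n div 2"
  show "0 \<le> yv n psi j"
    unfolding yv_def by (intro divide_nonneg_nonneg sum_nonneg xT_nonneg) auto
next
  let ?N = "{..<n}"
  fix i assume "i \<le> n"
  have "(\<Sum>j = 0..n div 2. kraw n i (2 * j) * yv n psi j)
      = (\<Sum>j = 0..n div 2. \<Sum>T\<in>{T. T \<in> Pow ?N \<and> card T = 2 * j}.
           kraw n i (card T) * xT n psi T / 3 ^ (n - card T))"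
  proof (rule sum.cong[OF refl])
    fix j
    show "kraw n i (2 * j) * yv n psi j = (\<Sum>T\<in>{T. T \<in> Pow ?N \<and> card T = 2 * j}.
           kraw n i (card T) * xT n psi T / 3 ^ (n - card T))"
      unfolding yv_def sum_distrib_left sum_divide_distrib
      by (rule sum.cong[OF refl]) auto
  qed
  also have "\<dots> = (\<Sum>T\<in>Pow ?N. if even (card T) then kraw n i (card T) * xT n psi T / 3 ^ (n - card T) else 0)"
    by (rule group_even)
  also have "\<dots> = (\<Sum>T\<in>Pow ?N. (-1) ^ card T * kraw n i (card T) * xT n psi T / 3 ^ (n - card T))"
  proof (rule sum.cong[OF refl])
    fix T assume "T \<in> Pow ?N"
    then show "(if even (card T) then kraw n i (card T) * xT n psi T / 3 ^ (n - card T) else 0)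
        = (-1) ^ card T * kraw n i (card T) * xT n psi T / 3 ^ (n - card T)"
      using xT_odd[of T n psi] by auto
  qed
  also have "\<dots> \<ge> 0" by (rule V_nonneg)
  finally show "0 \<le> (\<Sum>j = 0..n div 2. kraw n i (2 * j) * yv n psi j)" .
next
  let ?N = "{..<n}"
  have "(\<Sum>j = 0..n div 2. 3 ^ (n - 2 * j) * yv n psi j)
      = (\<Sum>j = 0..n div 2. \<Sum>T\<in>{T. T \<in> Pow ?N \<and> card T = 2 * j}. xT n psi T)"
    unfolding yv_def by simp
  also have "\<dots> = (\<Sum>T\<in>Pow ?N. if even (card T) then xT n psi T else 0)"
    by (rule group_even)
  also have "\<dots> = (\<Sum>T\<in>Pow ?N. xT n psi T)"
    by (rule sum.cong[OF refl]) (use xT_odd in auto)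
  also have "\<dots> = 1" by (rule xT_sum[OF pure])
  finally show "(\<Sum>j = 0..n div 2. 3 ^ (n - 2 * j) * yv n psi j) = 1" .
qed

lemma yv_obj: "3 ^ n * yv n psi 0 = 1 - conc_ent n psi"
proof -
  have "{T. T \<in> Pow {..<n} \<and> card T = 2 * 0} = {{}}"
    by (auto simp: finite_subset[of _ "{..<n}"] card_eq_0_iff)
  then have "3 ^ n * yv n psi 0 = xT n psi {}" unfolding yv_def by simp
  also have "\<dots> = 1 - conc_ent n psi"
    unfolding xT_def conc_ent_def by simp
  finally show ?thesis .
qed

theorem mainTheorem11:
  fixes n :: nat
  assumes "n \<ge> 1"
  shows "conc_ent_max n \<le> 1 - LP_val n"
  unfolding conc_ent_max_def
proof (rule cSUP_least)
  let ?psi0 = "\<lambda>u::nat set. if u = {} then (1::complex) else 0"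
  have "pure_state n ?psi0"
  proof -
    have "(\<Sum>x\<in>Pow {..<n}. (cmod (?psi0 x))^2) = (\<Sum>x\<in>Pow {..<n}. if x = {} then 1 else 0)"
      by (intro sum.cong refl) auto
    also have "\<dots> = 1" by simp
    finally show ?thesis unfolding pure_state_def .
  qed
  then show "{psi. pure_state n psi} \<noteq> {}" by blast
next
  fix psi assume "psi \<in> {psi. pure_state n psi}"
  then have pure: "pure_state n psi" by simp
  have bdd: "bdd_below ((\<lambda>y. 3 ^ n * y 0) ` {y. lp_feasible n y})"
  proof (rule bdd_belowI[where m=0])
    fix v assume "v \<in> (\<lambda>y. 3 ^ n * y 0) ` {y. lp_feasible n y}"
    then obtain y where "lp_feasible n y" "v = 3 ^ n * y 0" by auto
    then show "0 \<le> v" unfolding lp_feasible_def by auto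
  qed
  have "LP_val n \<le> 3 ^ n * yv n psi 0"
    unfolding LP_val_def
    by (rule cINF_lower[OF bdd]) (use yv_feasible[OF pure] in simp)
  then show "conc_ent n psi \<le> 1 - LP_val n" using yv_obj[of n psi] by simp
qed

end
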